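(* Let $v\ge4$ be an integer with $v\not\equiv2\pmod 4$. Then an optimum $(d,2)$-CDA$((d+1)v^2;5,v)$ exists for every positive integer $d$ with $d+1\le v$.
   Context: Consecutive $t$-way interaction in an $N\times k$ array $A=(a_{ij})$ over a $v$-set $V$: $T=\{(i,x_i),\dots,(i+t-1,x_{i+t-1})\}$, $1\le i\le k-t+1$, $x_r\in V$; $\rho(A,T)=\{r: a_{r,j}=x_j\ \forall (j,x_j)\in T\}$, $\rho(A,\mathcal T)=\bigcup_{T\in\mathcal T}\rho(A,T)$. A $(d,t)$-CDA$(N;k,v)$ is an $N\times k$ array over $V$ in which every $t$ consecutive columns contain every $t$-tuple at least once, and such that for every set $\mathcal T$ of exactly $d$ distinct consecutive $t$-way interactions and every consecutive $t$-way interaction $T$: $\rho(A,T)\subseteq\rho(A,\mathcal T)$ iff $T\in\mathcal T$. It is optimum if $N=(d+1)v^t$. *)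

theory Defs
  imports Main
begin

(* An N x k array over the v-set V = {0..<v}: rows 0..<N, columns 0..<k (0-indexed),
   represented as a function A :: nat => nat => nat; entry A r c. *)

definition is_array :: "(nat \<Rightarrow> nat \<Rightarrow> nat) \<Rightarrow> nat \<Rightarrow> nat \<Rightarrow> nat \<Rightarrow> bool" where
  "is_array A N k v \<longleftrightarrow> (\<forall>r<N. \<forall>c<k. A r c < v)"

(* A consecutive t-way interaction {(i,x_0),...,(i+t-1,x_{t-1})} is encoded as the pair (i, xs)
   with start column i (0-indexed, i + t \<le> k) and xs a list of t symbols from V. *)
definition cons_interactions :: "nat \<Rightarrow> nat \<Rightarrow> nat \<Rightarrow> (nat \<times> nat list) set" where
  "cons_interactions k t v =
     {(i, xs). i + t \<le> k \<and> length xs = t \<and> set xs \<subseteq> {0..<v}}"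

definition rho :: "(nat \<Rightarrow> nat \<Rightarrow> nat) \<Rightarrow> nat \<Rightarrow> nat \<times> nat list \<Rightarrow> nat set" where
  "rho A N T = {r. r < N \<and> (\<forall>j<length (snd T). A r (fst T + j) = snd T ! j)}"

definition rho_set :: "(nat \<Rightarrow> nat \<Rightarrow> nat) \<Rightarrow> nat \<Rightarrow> (nat \<times> nat list) set \<Rightarrow> nat set" where
  "rho_set A N TT = (\<Union>T\<in>TT. rho A N T)"

definition is_CDA :: "nat \<Rightarrow> nat \<Rightarrow> (nat \<Rightarrow> nat \<Rightarrow> nat) \<Rightarrow> nat \<Rightarrow> nat \<Rightarrow> nat \<Rightarrow> bool" where
  "is_CDA d t A N k v \<longleftrightarrow>
     is_array A N k v \<and>
     (\<forall>T\<in>cons_interactions k t v. rho A N T \<noteq> {}) \<and>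
     (\<forall>TT. TT \<subseteq> cons_interactions k t v \<longrightarrow> card TT = d \<longrightarrow>
        (\<forall>T\<in>cons_interactions k t v. rho A N T \<subseteq> rho_set A N TT \<longleftrightarrow> T \<in> TT))"

definition is_optimum_CDA :: "nat \<Rightarrow> nat \<Rightarrow> (nat \<Rightarrow> nat \<Rightarrow> nat) \<Rightarrow> nat \<Rightarrow> nat \<Rightarrow> nat \<Rightarrow> bool" where
  "is_optimum_CDA d t A N k v \<longleftrightarrow> is_CDA d t A N k v \<and> N = (d + 1) * v ^ t"

end

theory Submission
  imports Defs "HOL-Number_Theory.Cong"
begin

definition Lr :: "nat \<Rightarrow> nat \<Rightarrow> nat" where "Lr v r = r div (v*v)"
definition Xr :: "nat \<Rightarrow> nat \<Rightarrow> nat" where "Xr v r = (r div v) mod v"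
definition Yr :: "nat \<Rightarrow> nat \<Rightarrow> nat" where "Yr v r = r mod v"

definition Aa :: "nat \<Rightarrow> nat \<Rightarrow> nat \<Rightarrow> nat" where
  "Aa v r c = (if c = 0 then Xr v r else if c = 1 then Yr v r
      else if c = 2 then (Lr v r + Xr v r) mod v
      else if c = 3 then (Lr v r + Yr v r) mod v else Xr v r)"

lemma recon: "r = Lr v r * (v*v) + Xr v r * v + Yr v r"
proof -
  have "r = (r div v) * v + r mod v" by simp
  moreover have "r div v = (r div v div v) * v + (r div v) mod v" by simp
  moreover have "r div v div v = r div (v*v)" by (simp add: div_mult2_eq)
  ultimately show ?thesis unfolding Lr_def Xr_def Yr_def
    by (metis add_mult_distrib mult.assoc)
qed

lemma row_eq: "Lr v r = Lr v r' \<Longrightarrow> Xr v r = Xr v r' \<Longrightarrow> Yr v r = Yr v r' \<Longrightarrow> r = r'"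
  by (metis recon)

lemma cancel: "(p + q) mod v = (p' + q) mod v \<Longrightarrow> p < v \<Longrightarrow> p' < (v::nat) \<Longrightarrow> p = p'"
proof -
  assume a: "(p + q) mod v = (p' + q) mod (v::nat)" "p < v" "p' < v"
  then have "[p + q = p' + q] (mod v)" by (simp add: cong_def)
  then have "[p = p'] (mod v)" by (simp add: cong_add_rcancel_nat)
  then show ?thesis using a by (simp add: cong_def)
qed

lemma cancel2: "(q + p) mod v = (q + p') mod v \<Longrightarrow> p < v \<Longrightarrow> p' < (v::nat) \<Longrightarrow> p = p'"
  using cancel[of p q v p'] by (simp add: add.commute)

lemma bounds:
  assumes "v > 0" "r < (d+1)*v^2"
  shows "Lr v r < d+1" "Xr v r < v" "Yr v r < v"
  using assms unfolding Lr_def Xr_def Yr_def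
  by (auto simp: power2_eq_square less_mult_imp_div_less)

definition mk :: "nat \<Rightarrow> nat \<Rightarrow> nat \<Rightarrow> nat \<Rightarrow> nat" where
  "mk v s x y = s*(v*v) + x*v + y"

lemma mk_dec:
  assumes "x < v" "y < v"
  shows "Lr v (mk v s x y) = s" "Xr v (mk v s x y) = x" "Yr v (mk v s x y) = y"
proof -
  have d1: "mk v s x y div v = s*v + x" unfolding mk_def using assms
    by (simp add: mult.assoc[symmetric] add_mult_distrib[symmetric])
  have "mk v s x y div (v*v) = (mk v s x y div v) div v" by (simp add: div_mult2_eq)
  then show "Lr v (mk v s x y) = s" unfolding Lr_def using d1 assms by simp
  show "Xr v (mk v s x y) = x" unfolding Xr_def using d1 assms by simp
  show "Yr v (mk v s x y) = y" unfolding Yr_def mk_def using assms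
    by (simp add: mult.assoc[symmetric] add_mult_distrib[symmetric])
qed

lemma mk_less:
  assumes "x < v" "y < v" "s \<le> d"
  shows "mk v s x y < (d+1)*v^2"
proof -
  have "x*v + y < (x+1)*v" using assms by simp
  also have "\<dots> \<le> v*v" using assms by (intro mult_right_mono) auto
  finally have "x*v+y < v*v" .
  then have "mk v s x y < (s+1)*(v*v)" unfolding mk_def by simp
  also have "\<dots> \<le> (d+1)*(v*v)" using assms by (intro mult_right_mono) auto
  finally show ?thesis by (simp add: power2_eq_square)
qed

lemma shift: "(s::nat) \<le> v \<Longrightarrow> b < v \<Longrightarrow> (s + (b + v - s) mod v) mod v = b"
proof -
  assume a: "s \<le> v" "b < v"
  have "(s + (b + v - s) mod v) mod v = (s + (b + v - s)) mod v" by (rule mod_add_right_eq)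
  also have "s + (b + v - s) = b + v" using a by simp
  finally show ?thesis using a by simp
qed

lemma rho_pair: "rho A N (i,[a,b]) = {r. r < N \<and> A r i = a \<and> A r (Suc i) = b}"
  unfolding rho_def by (auto simp: less_Suc_eq)

lemma ci_form: "T \<in> cons_interactions 5 2 v \<Longrightarrow> \<exists>i a b. T = (i,[a,b]) \<and> i \<le> 3 \<and> a < v \<and> b < v"
  unfolding cons_interactions_def by (auto simp: length_Suc_conv numeral_2_eq_2)

lemma cover0:
  assumes "i \<le> 3" "a < v" "b < v" "s \<le> d" "d + 1 \<le> v"
  shows "\<exists>r. r < (d+1)*v^2 \<and> Aa v r i = a \<and> Aa v r (Suc i) = b \<and> Lr v r = s"
proof -
  have sv: "s \<le> v" using assms by simp
  have xm: "\<And>c. (c + v - s) mod v < v" using assms by simp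
  have "i = 0 \<or> i = 1 \<or> i = 2 \<or> i = 3" using assms by auto
  moreover
  { assume "i = 0"
    then have ?thesis using assms mk_dec[of a v b s] mk_less[of a v b s d]
      by (intro exI[of _ "mk v s a b"]) (simp add: Aa_def) }
  moreover
  { assume "i = 1"
    let ?x = "(b + v - s) mod v"
    have "?x < v" by (rule xm)
    then have ?thesis using \<open>i=1\<close> assms mk_dec[of ?x v a s] mk_less[of ?x v a s d] shift[OF sv, of b]
      by (intro exI[of _ "mk v s ?x a"]) (simp add: Aa_def) }
  moreover
  { assume "i = 2"
    let ?x = "(a + v - s) mod v"
    let ?y = "(b + v - s) mod v"
    have "?x < v" "?y < v" by (rule xm)+
    then have ?thesis using \<open>i=2\<close> assms mk_dec[of ?x v ?y s] mk_less[of ?x v ?y s d]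
       shift[OF sv, of b] shift[OF sv, of a]
      by (intro exI[of _ "mk v s ?x ?y"]) (simp add: Aa_def) }
  moreover
  { assume "i = 3"
    let ?y = "(a + v - s) mod v"
    have "?y < v" by (rule xm)
    then have ?thesis using \<open>i=3\<close> assms mk_dec[of b v ?y s] mk_less[of b v ?y s d] shift[OF sv, of a]
      by (intro exI[of _ "mk v s b ?y"]) (simp add: Aa_def) }
  ultimately show ?thesis by blast
qed

lemma K:
  assumes "v > 0" "r < (d+1)*v^2" "r' < (d+1)*v^2" "d + 1 \<le> v"
  and "(Xr v r = Xr v r' \<and> Yr v r = Yr v r' \<and> (Lr v r + Xr v r) mod v = (Lr v r' + Xr v r') mod v)
     \<or> (Xr v r = Xr v r' \<and> Yr v r = Yr v r' \<and> (Lr v r + Yr v r) mod v = (Lr v r' + Yr v r') mod v)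
     \<or> (Xr v r = Xr v r' \<and> (Lr v r + Xr v r) mod v = (Lr v r' + Xr v r') mod v \<and> (Lr v r + Yr v r) mod v = (Lr v r' + Yr v r') mod v)
     \<or> (Yr v r = Yr v r' \<and> (Lr v r + Xr v r) mod v = (Lr v r' + Xr v r') mod v \<and> (Lr v r + Yr v r) mod v = (Lr v r' + Yr v r') mod v)"
  shows "r = r'"
proof -
  have b: "Lr v r < v" "Lr v r' < v" "Xr v r < v" "Xr v r' < v" "Yr v r < v" "Yr v r' < v"
    using bounds[OF assms(1) assms(2)] bounds[OF assms(1) assms(3)] assms(4) by auto
  show ?thesis using assms(5)
  proof (elim disjE conjE)
    assume "Xr v r = Xr v r'" "Yr v r = Yr v r'" "(Lr v r + Xr v r) mod v = (Lr v r' + Xr v r') mod v"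
    then show ?thesis using b cancel[of "Lr v r" "Xr v r" v "Lr v r'"] row_eq by auto
  next
    assume "Xr v r = Xr v r'" "Yr v r = Yr v r'" "(Lr v r + Yr v r) mod v = (Lr v r' + Yr v r') mod v"
    then show ?thesis using b cancel[of "Lr v r" "Yr v r" v "Lr v r'"] row_eq by auto
  next
    assume a: "Xr v r = Xr v r'" "(Lr v r + Xr v r) mod v = (Lr v r' + Xr v r') mod v"
      "(Lr v r + Yr v r) mod v = (Lr v r' + Yr v r') mod v"
    then have "Lr v r = Lr v r'" using b cancel[of "Lr v r" "Xr v r" v "Lr v r'"] by auto
    moreover have "Yr v r = Yr v r'" using a(3) b cancel2[of "Lr v r" "Yr v r" v "Yr v r'"] \<open>Lr v r = Lr v r'\<close> by auto
    ultimately show ?thesis using a row_eq by auto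
  next
    assume a: "Yr v r = Yr v r'" "(Lr v r + Xr v r) mod v = (Lr v r' + Xr v r') mod v"
      "(Lr v r + Yr v r) mod v = (Lr v r' + Yr v r') mod v"
    then have "Lr v r = Lr v r'" using b cancel[of "Lr v r" "Yr v r" v "Lr v r'"] by auto
    moreover have "Xr v r = Xr v r'" using a(2) b cancel2[of "Lr v r" "Xr v r" v "Xr v r'"] \<open>Lr v r = Lr v r'\<close> by auto
    ultimately show ?thesis using a row_eq by auto
  qed
qed

lemma uniq0:
  assumes "v > 0" "r < (d+1)*v^2" "r' < (d+1)*v^2" "d + 1 \<le> v" "i \<le> 3" "i' \<le> 3" "i \<noteq> i'"
    "Aa v r i = Aa v r' i" "Aa v r (Suc i) = Aa v r' (Suc i)"
    "Aa v r i' = Aa v r' i'" "Aa v r (Suc i') = Aa v r' (Suc i')"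
  shows "r = r'"
proof (rule K[OF assms(1-4)])
  have "i = 0 \<or> i = 1 \<or> i = 2 \<or> i = 3" "i' = 0 \<or> i' = 1 \<or> i' = 2 \<or> i' = 3" using assms by auto
  then show "(Xr v r = Xr v r' \<and> Yr v r = Yr v r' \<and> (Lr v r + Xr v r) mod v = (Lr v r' + Xr v r') mod v)
     \<or> (Xr v r = Xr v r' \<and> Yr v r = Yr v r' \<and> (Lr v r + Yr v r) mod v = (Lr v r' + Yr v r') mod v)
     \<or> (Xr v r = Xr v r' \<and> (Lr v r + Xr v r) mod v = (Lr v r' + Xr v r') mod v \<and> (Lr v r + Yr v r) mod v = (Lr v r' + Yr v r') mod v)
     \<or> (Yr v r = Yr v r' \<and> (Lr v r + Xr v r) mod v = (Lr v r' + Xr v r') mod v \<and> (Lr v r + Yr v r) mod v = (Lr v r' + Yr v r') mod v)"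
    using assms(7-11) by (auto simp: Aa_def)
qed

lemma cover:
  assumes "T \<in> cons_interactions 5 2 v" "s \<le> d" "d + 1 \<le> v"
  shows "\<exists>r\<in>rho (Aa v) ((d+1)*v^2) T. Lr v r = s"
proof -
  obtain i a b where T: "T = (i,[a,b])" "i \<le> 3" "a < v" "b < v" using ci_form[OF assms(1)] by blast
  show ?thesis using cover0[OF T(2-4) assms(2,3)] unfolding T(1) rho_pair by auto
qed

lemma uniq:
  assumes "v > 0" "d + 1 \<le> v" "T \<in> cons_interactions 5 2 v" "T' \<in> cons_interactions 5 2 v" "T \<noteq> T'"
    "r \<in> rho (Aa v) ((d+1)*v^2) T" "r \<in> rho (Aa v) ((d+1)*v^2) T'"
    "r' \<in> rho (Aa v) ((d+1)*v^2) T" "r' \<in> rho (Aa v) ((d+1)*v^2) T'"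
  shows "r = r'"
proof -
  obtain i a b where T: "T = (i,[a,b])" "i \<le> 3" using ci_form[OF assms(3)] by blast
  obtain i' a' b' where T': "T' = (i',[a',b'])" "i' \<le> 3" using ci_form[OF assms(4)] by blast
  have m: "r < (d+1)*v^2" "r' < (d+1)*v^2" "Aa v r i = a" "Aa v r (Suc i) = b" "Aa v r' i = a" "Aa v r' (Suc i) = b"
     "Aa v r i' = a'" "Aa v r (Suc i') = b'" "Aa v r' i' = a'" "Aa v r' (Suc i') = b'"
    using assms(6-9) unfolding T(1) T'(1) rho_pair by auto
  have "i \<noteq> i'" using assms(5) m T T' by auto
  then show ?thesis using uniq0[OF assms(1) m(1,2) assms(2) T(2) T'(2)] m by auto
qed

theorem mainTheorem17:
  fixes v d :: nat
  assumes "v \<ge> 4" and "v mod 4 \<noteq> 2" and "d \<ge> 1" and "d + 1 \<le> v"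
  shows "\<exists>A. is_optimum_CDA d 2 A ((d + 1) * v ^ 2) 5 v"
proof (intro exI[of _ "Aa v"])
  let ?N = "(d + 1) * v ^ 2"
  let ?C = "cons_interactions 5 2 v"
  have v0: "v > 0" using assms by simp
  have arr: "is_array (Aa v) ?N 5 v"
    unfolding is_array_def Aa_def Xr_def Yr_def using v0 by auto
  have ne: "\<forall>T\<in>?C. rho (Aa v) ?N T \<noteq> {}"
    using cover[of _ v 0 d] assms by fastforce
  have main: "rho (Aa v) ?N T \<subseteq> rho_set (Aa v) ?N TT \<longleftrightarrow> T \<in> TT"
    if TT: "TT \<subseteq> ?C" "card TT = d" and T: "T \<in> ?C" for TT T
  proof
    assume "T \<in> TT" then show "rho (Aa v) ?N T \<subseteq> rho_set (Aa v) ?N TT"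
      unfolding rho_set_def by auto
  next
    assume sub: "rho (Aa v) ?N T \<subseteq> rho_set (Aa v) ?N TT"
    show "T \<in> TT"
    proof (rule ccontr)
      assume nT: "T \<notin> TT"
      have fin: "finite TT" using TT assms(3) card.infinite by fastforce
      have "\<forall>s\<in>{0..d}. \<exists>r T'. r \<in> rho (Aa v) ?N T \<and> Lr v r = s \<and> T' \<in> TT \<and> r \<in> rho (Aa v) ?N T'"
      proof
        fix s assume "s \<in> {0..d}"
        then obtain r where r: "r \<in> rho (Aa v) ?N T" "Lr v r = s" using cover[OF T _ assms(4)] by auto
        then obtain T' where "T' \<in> TT" "r \<in> rho (Aa v) ?N T'" using sub unfolding rho_set_def by auto
        then show "\<exists>r T'. r \<in> rho (Aa v) ?N T \<and> Lr v r = s \<and> T' \<in> TT \<and> r \<in> rho (Aa v) ?N T'"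
          using r by blast
      qed
      then obtain R G where RG: "\<And>s. s \<in> {0..d} \<Longrightarrow> R s \<in> rho (Aa v) ?N T \<and> Lr v (R s) = s \<and> G s \<in> TT \<and> R s \<in> rho (Aa v) ?N (G s)"
        by metis
      have "inj_on G {0..d}"
      proof (rule inj_onI)
        fix s s' assume ss: "s \<in> {0..d}" "s' \<in> {0..d}" "G s = G s'"
        have "G s \<noteq> T" using RG[OF ss(1)] nT by auto
        then have "R s = R s'"
          using uniq[OF v0 assms(4) T, of "G s" "R s" "R s'"] RG[OF ss(1)] RG[OF ss(2)] ss(3) TT(1) by auto
        then show "s = s'" using RG[OF ss(1)] RG[OF ss(2)] by metis
      qed
      moreover have "G ` {0..d} \<subseteq> TT" using RG by auto
      ultimately have "card {0..d} \<le> card TT" using fin card_inj_on_le by blast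
      then show False using TT(2) by simp
    qed
  qed
  show "is_optimum_CDA d 2 (Aa v) ?N 5 v"
    unfolding is_optimum_CDA_def is_CDA_def using arr ne main by blast
qed

end
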